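(* Let $\phi(t)=\mathbf{E}e^{itY}$ be the characteristic function of the limiting Quicksort random variable $Y$. Then $|\phi(t)|\le 2|t|^{-1/2}$ for every real $t\neq 0$.
   Context: Let $g(u):=2u\ln u+2(1-u)\ln(1-u)+1$ for $u\in(0,1)$. The limiting Quicksort random variable $Y$ is the limit in distribution of $(X_n-\mathbf{E}X_n)/n$, where $X_n$ is the number of comparisons used by randomized Quicksort on $n$ distinct numbers; equivalently, its law is the unique law with $\mathbf{E}Y=0$ and finite variance satisfying $Y\overset{d}{=}UY+(1-U)Z+g(U)$, where on the right $U,Y,Z$ are independent, $Z\overset{d}{=}Y$ and $U$ is uniform on $(0,1)$. *)

theory Defs
  imports "HOL-Probability.Probability"
begin

definition qs_toll :: "real \<Rightarrow> real" where
  "qs_toll u = 2 * u * ln u + 2 * (1 - u) * ln (1 - u) + 1"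

definition unif01 :: "real measure" where
  "unif01 = uniform_measure lborel {0<..<1}"

text \<open>The law M of the limiting Quicksort variable Y: the law with mean zero, finite variance,
  satisfying Y =d U Y + (1-U) Z + g(U) with U, Y, Z independent, Z =d Y, U uniform on (0,1).\<close>
definition is_quicksort_limit_law :: "real measure \<Rightarrow> bool" where
  "is_quicksort_limit_law M \<longleftrightarrow>
     real_distribution M \<and>
     integrable M (\<lambda>x. x ^ 2) \<and>
     (\<integral>x. x \<partial>M) = 0 \<and>
     M = distr (unif01 \<Otimes>\<^sub>M (M \<Otimes>\<^sub>M M)) borel
           (\<lambda>(u, y, z). u * y + (1 - u) * z + qs_toll u)"

end

theory Submission
  imports Defs
begin

lemma vdc:
  fixes \<phi> \<phi>1 \<phi>2 :: "real \<Rightarrow> real" and p q :: real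
  assumes pq: "p \<le> q"
    and d1: "\<And>u. u \<in> {p..q} \<Longrightarrow> (\<phi> has_real_derivative \<phi>1 u) (at u)"
    and d2: "\<And>u. u \<in> {p..q} \<Longrightarrow> (\<phi>1 has_real_derivative \<phi>2 u) (at u)"
    and nz: "\<And>u. u \<in> {p..q} \<Longrightarrow> \<phi>1 u \<noteq> 0"
    and pos: "\<And>u. u \<in> {p..q} \<Longrightarrow> \<phi>2 u \<ge> 0"
  shows "norm (integral {p..q} (\<lambda>u. iexp (\<phi> u))) \<le> 1 / \<bar>\<phi>1 p\<bar> + 1 / \<bar>\<phi>1 q\<bar> + (1 / \<phi>1 p - 1 / \<phi>1 q)"
proof -
  define F where "F u = iexp (\<phi> u) * of_real (inverse (\<phi>1 u)) * (- \<i>)" for u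
  define R where "R u = \<i> * iexp (\<phi> u) * of_real (\<phi>2 u / (\<phi>1 u)^2)" for u
  have dF: "(F has_vector_derivative (iexp (\<phi> u) + R u)) (at u within {p..q})" if u: "u \<in> {p..q}" for u
  proof -
    have e: "((\<lambda>u. iexp (\<phi> u)) has_vector_derivative (\<phi>1 u *\<^sub>R (\<i> * iexp (\<phi> u)))) (at u within {p..q})"
      using vector_diff_chain_within[of \<phi> "\<phi>1 u" u "{p..q}" iexp "\<i> * iexp (\<phi> u)"]
        d1[OF u] has_vector_derivative_iexp
      by (simp add: o_def has_real_derivative_iff_has_vector_derivative has_vector_derivative_at_within)
    have i: "((\<lambda>u. inverse (\<phi>1 u)) has_real_derivative (- (\<phi>2 u) / (\<phi>1 u)^2)) (at u within {p..q})"
      using has_field_derivative_at_within[OF DERIV_inverse_fun[OF d2[OF u] nz[OF u]]]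
      by (simp add: power2_eq_square divide_inverse)
    have "(F has_vector_derivative ((iexp (\<phi> u) * of_real (- (\<phi>2 u) / (\<phi>1 u)^2) + (\<phi>1 u *\<^sub>R (\<i> * iexp (\<phi> u))) * of_real (inverse (\<phi>1 u))) * (- \<i>))) (at u within {p..q})"
      unfolding F_def
      by (intro has_vector_derivative_mult_left has_vector_derivative_mult e has_vector_derivative_of_real i)
    moreover have "(iexp (\<phi> u) * of_real (- (\<phi>2 u) / (\<phi>1 u)^2) + (\<phi>1 u *\<^sub>R (\<i> * iexp (\<phi> u))) * of_real (inverse (\<phi>1 u))) * (- \<i>) = iexp (\<phi> u) + R u"
      using nz[OF u] unfolding R_def
      by (simp add: scaleR_conv_of_real field_simps)
    ultimately show ?thesis by simp
  qed
  have ftc1: "((\<lambda>u. iexp (\<phi> u) + R u) has_integral (F q - F p)) {p..q}"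
    by (rule fundamental_theorem_of_calculus[OF pq]) (rule dF)
  have dG: "((\<lambda>u. - inverse (\<phi>1 u)) has_vector_derivative (\<phi>2 u / (\<phi>1 u)^2)) (at u within {p..q})" if u: "u \<in> {p..q}" for u
  proof -
    have "((\<lambda>u. - inverse (\<phi>1 u)) has_real_derivative (\<phi>2 u / (\<phi>1 u)^2)) (at u)"
      using DERIV_minus[OF DERIV_inverse_fun[OF d2[OF u] nz[OF u]]]
      by (simp add: power2_eq_square divide_inverse)
    then show ?thesis
      by (simp add: has_real_derivative_iff_has_vector_derivative has_vector_derivative_at_within)
  qed
  have ftc2: "((\<lambda>u. \<phi>2 u / (\<phi>1 u)^2) has_integral (1 / \<phi>1 p - 1 / \<phi>1 q)) {p..q}"
    using fundamental_theorem_of_calculus[OF pq, of "\<lambda>u. - inverse (\<phi>1 u)"] dG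
    by (simp add: divide_inverse)
  have cont: "continuous_on {p..q} (\<lambda>u. iexp (\<phi> u))"
  proof -
    have "continuous_on {p..q} \<phi>"
      using d1 by (meson DERIV_continuous continuous_at_imp_continuous_on)
    then show ?thesis by (intro continuous_intros)
  qed
  have intE: "(\<lambda>u. iexp (\<phi> u)) integrable_on {p..q}"
    using cont integrable_continuous_interval by blast
  have intR: "R integrable_on {p..q}"
  proof -
    have "(\<lambda>u. (iexp (\<phi> u) + R u) - iexp (\<phi> u)) integrable_on {p..q}"
      using ftc1 intE integrable_diff has_integral_integrable by blast
    then show ?thesis by simp
  qed
  have eq: "integral {p..q} (\<lambda>u. iexp (\<phi> u)) = (F q - F p) - integral {p..q} R"
  proof -
    have "integral {p..q} (\<lambda>u. iexp (\<phi> u) + R u) = F q - F p"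
      using ftc1 by (rule integral_unique)
    moreover have "integral {p..q} (\<lambda>u. iexp (\<phi> u) + R u) = integral {p..q} (\<lambda>u. iexp (\<phi> u)) + integral {p..q} R"
      using intE intR by (rule integral_add)
    ultimately show ?thesis by (simp add: algebra_simps)
  qed
  have nR: "norm (integral {p..q} R) \<le> 1 / \<phi>1 p - 1 / \<phi>1 q"
  proof -
    have "norm (integral {p..q} R) \<le> integral {p..q} (\<lambda>u. \<phi>2 u / (\<phi>1 u)^2)"
    proof (rule integral_norm_bound_integral[OF intR])
      show "(\<lambda>u. \<phi>2 u / (\<phi>1 u)^2) integrable_on {p..q}" using ftc2 by blast
      fix u assume u: "u \<in> {p..q}"
      show "norm (R u) \<le> \<phi>2 u / (\<phi>1 u)^2"
        using pos[OF u] unfolding R_def by (simp add: norm_mult norm_divide norm_power)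
    qed
    then show ?thesis using ftc2 integral_unique by metis
  qed
  have nF: "norm (F u) = 1 / \<bar>\<phi>1 u\<bar>" for u
    unfolding F_def by (simp add: norm_mult norm_inverse divide_inverse)
  have "norm (integral {p..q} (\<lambda>u. iexp (\<phi> u))) \<le> norm (F q) + norm (F p) + norm (integral {p..q} R)"
    unfolding eq by (metis norm_triangle_ineq4 norm_triangle_le_diff add_mono order_refl)
  then show ?thesis using nR nF by simp
qed

lemma qs_toll_measurable[measurable]: "qs_toll \<in> borel_measurable borel"
  unfolding qs_toll_def by measurable

lemma eps_right:
  fixes N K b :: real
  assumes "b < 1" "\<And>c. b < c \<Longrightarrow> c < 1 \<Longrightarrow> N \<le> K + (1 - c)"
  shows "N \<le> K"
proof (rule ccontr)
  assume "\<not> N \<le> K"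
  define c where "c = max ((1 + b) / 2) (1 - (N - K) / 2)"
  have "c \<ge> (1 + b) / 2" unfolding c_def by simp
  then have "b < c" using assms(1) by (simp add: field_simps)
  have "c < 1" using assms(1) \<open>\<not> N \<le> K\<close> unfolding c_def by simp
  have "N \<le> K + (1 - c)" using \<open>b < c\<close> \<open>c < 1\<close> by (rule assms(2))
  moreover have "c \<ge> 1 - (N - K) / 2" unfolding c_def by simp
  then have "1 - c \<le> (N - K) / 2" by linarith
  ultimately have "N - K \<le> (N - K) / 2" by linarith
  then show False using \<open>\<not> N \<le> K\<close> by (simp add: field_simps)
qed

lemma eps_left:
  fixes N K a :: real
  assumes "0 < a" "\<And>c. 0 < c \<Longrightarrow> c < a \<Longrightarrow> N \<le> K + c"
  shows "N \<le> K"
proof (rule ccontr)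
  assume "\<not> N \<le> K"
  define c where "c = min (a / 2) ((N - K) / 2)"
  have "0 < c" "c < a" using assms(1) \<open>\<not> N \<le> K\<close> unfolding c_def by auto
  then have "N \<le> K + c" by (rule assms(2))
  moreover have "c \<le> (N - K) / 2" unfolding c_def by (simp add: min_def)
  ultimately have "N - K \<le> (N - K) / 2" by linarith
  then show False using \<open>\<not> N \<le> K\<close> by (simp add: field_simps)
qed

lemma toll_deriv:
  assumes "0 < u" "u < 1"
  shows "(qs_toll has_real_derivative (2 * ln u - 2 * ln (1 - u))) (at u)"
proof -
  have "((\<lambda>u. 2 * u * ln u + 2 * (1 - u) * ln (1 - u) + 1) has_real_derivative
     (2 * ln u + 2 * u * (1 / u) + (- 2 * ln (1 - u) + 2 * (1 - u) * (- 1 / (1 - u))))) (at u)"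
    using assms by (auto intro!: derivative_eq_intros)
  moreover have "2 * ln u + 2 * u * (1 / u) + (- 2 * ln (1 - u) + 2 * (1 - u) * (- 1 / (1 - u))) = 2 * ln u - 2 * ln (1 - u)"
    using assms by (simp add: field_simps)
  ultimately show ?thesis unfolding qs_toll_def[abs_def] by simp
qed

lemma toll_deriv2:
  assumes "0 < u" "u < 1"
  shows "((\<lambda>u. 2 * ln u - 2 * ln (1 - u)) has_real_derivative (2 / u + 2 / (1 - u))) (at u)"
proof -
  have "((\<lambda>u. 2 * ln u - 2 * ln (1 - u)) has_real_derivative (2 * (1 / u) - 2 * (- 1 / (1 - u)))) (at u)"
    using assms by (auto intro!: derivative_eq_intros)
  then show ?thesis by simp
qed

lemma core:
  fixes t c d :: real
  assumes t: "t > 0"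
    and int: "(\<lambda>u. iexp (t * (c + d * u + qs_toll u))) integrable_on {0..1}"
  shows "norm (integral {0..1} (\<lambda>u. iexp (t * (c + d * u + qs_toll u)))) \<le> 2 / sqrt t"
proof -
  define \<phi> where "\<phi> u = t * (c + d * u + qs_toll u)" for u
  define \<phi>1 where "\<phi>1 u = t * (d + (2 * ln u - 2 * ln (1 - u)))" for u
  define \<phi>2 where "\<phi>2 u = t * (2 / u + 2 / (1 - u))" for u
  define f where "f u = iexp (\<phi> u)" for u
  have intf: "f integrable_on {0..1}" using int unfolding f_def \<phi>_def .
  have D1: "(\<phi> has_real_derivative \<phi>1 u) (at u)" if "0 < u" "u < 1" for u
    unfolding \<phi>_def[abs_def] \<phi>1_def
    using toll_deriv[OF that] that by (auto intro!: derivative_eq_intros)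
  have D2: "(\<phi>1 has_real_derivative \<phi>2 u) (at u)" if "0 < u" "u < 1" for u
    unfolding \<phi>1_def[abs_def] \<phi>2_def
    using toll_deriv2[OF that] that by (auto intro!: derivative_eq_intros)
  have P2: "\<phi>2 u \<ge> 8 * t" if "0 < u" "u < 1" for u
  proof -
    have "2 / u + 2 / (1 - u) = 2 / (u * (1 - u))" using that by (simp add: field_simps)
    moreover have "u * (1 - u) \<le> 1 / 4"
    proof -
      have "(1 - 2*u)^2 = 1 - 4*(u*(1-u))" by (simp add: power2_eq_square algebra_simps)
      moreover have "(1 - 2*u)^2 \<ge> 0" by simp
      ultimately show ?thesis by linarith
    qed
    moreover have "u * (1 - u) > 0" using that by simp
    ultimately have "2 / u + 2 / (1 - u) \<ge> 2 / (1/4)"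
      by (metis divide_left_mono mult_pos_pos zero_less_divide_iff zero_less_numeral
           less_eq_real_def zero_less_one)
    then have "8 \<le> 2 / u + 2 / (1 - u)" by simp
    then have "t * 8 \<le> t * (2 / u + 2 / (1 - u))" using t by (intro mult_left_mono) auto
    then show ?thesis unfolding \<phi>2_def by simp
  qed
  have mono: "\<phi>1 u \<le> \<phi>1 v" if "0 < u" "u \<le> v" "v < 1" for u v
  proof -
    have "ln u \<le> ln v" using that by simp
    moreover have "ln (1 - v) \<le> ln (1 - u)" using that by simp
    ultimately show ?thesis unfolding \<phi>1_def using t by (intro mult_left_mono) auto
  qed
  define lam where "lam = 4 * sqrt t"
  have lpos: "lam > 0" unfolding lam_def using t by simp
  define ea where "ea = exp ((- lam / t - d) / 2)"
  define eb where "eb = exp ((lam / t - d) / 2)"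
  define a where "a = ea / (1 + ea)"
  define b where "b = eb / (1 + eb)"
  have ea: "ea > 0" unfolding ea_def by simp
  have eb: "eb > 0" unfolding eb_def by simp
  have eab: "ea < eb" unfolding ea_def eb_def using lpos t by (simp add: divide_strict_right_mono)
  have a0: "0 < a" and a1: "a < 1" unfolding a_def using ea by auto
  have b0: "0 < b" and b1: "b < 1" unfolding b_def using eb by auto
  have ab: "a < b" unfolding a_def b_def using ea eb eab by (simp add: field_simps)
  have la: "\<phi>1 a = - lam"
  proof -
    have "1 - a = 1 / (1 + ea)" unfolding a_def using ea by (simp add: field_simps)
    then have "ln a - ln (1 - a) = ln ea" unfolding a_def using ea by (simp add: ln_div)
    also have "\<dots> = (- lam / t - d) / 2" unfolding ea_def by simp
    finally show ?thesis unfolding \<phi>1_def using t by (simp add: field_simps)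
  qed
  have lb: "\<phi>1 b = lam"
  proof -
    have "1 - b = 1 / (1 + eb)" unfolding b_def using eb by (simp add: field_simps)
    then have "ln b - ln (1 - b) = ln eb" unfolding b_def using eb by (simp add: ln_div)
    also have "\<dots> = (lam / t - d) / 2" unfolding eb_def by simp
    finally show ?thesis unfolding \<phi>1_def using t by (simp add: field_simps)
  qed
  have width: "b - a \<le> lam / (4 * t)"
  proof -
    have "\<forall>x. a \<le> x \<and> x \<le> b \<longrightarrow> DERIV \<phi>1 x :> \<phi>2 x"
      using D2 a0 b1 by auto
    then obtain z where z: "a < z" "z < b" "\<phi>1 b - \<phi>1 a = (b - a) * \<phi>2 z"
      using MVT2[OF ab, of \<phi>1 \<phi>2] by blast
    have "\<phi>2 z \<ge> 8 * t" using P2 z a0 b1 by simp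
    then have "(b - a) * (8 * t) \<le> (b - a) * \<phi>2 z" using ab by (intro mult_left_mono) auto
    then have "(b - a) * (8 * t) \<le> 2 * lam" using z la lb by simp
    then show ?thesis using t by (simp add: field_simps)
  qed
  have sub: "f integrable_on {x..y}" if "0 \<le> x" "y \<le> 1" for x y
    by (rule integrable_subinterval_real[OF intf]) (use that in auto)
  have intab: "f integrable_on {a..b}"
    using a0 b1 by (intro sub) auto
  have mid: "norm (integral {a..b} f) \<le> b - a"
  proof -
    have "norm (integral {a..b} f) \<le> integral {a..b} (\<lambda>_. 1::real)"
      by (rule integral_norm_bound_integral[OF intab]) (auto simp: f_def)
    then show ?thesis using ab by simp
  qed
  have right: "norm (integral {b..1} f) \<le> 2 / lam"
  proof (rule eps_right[OF b1])
    fix e assume e: "b < e" "e < 1"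
    have sp: "integral {b..e} f + integral {e..1} f = integral {b..1} f"
      using e b0 by (intro Henstock_Kurzweil_Integration.integral_combine sub) auto
    have n1: "norm (integral {b..e} f) \<le> 2 / lam"
    proof -
      have ge: "\<phi>1 e \<ge> lam" using mono[of b e] lb e b0 by simp
      have "norm (integral {b..e} f) \<le> 1 / \<bar>\<phi>1 b\<bar> + 1 / \<bar>\<phi>1 e\<bar> + (1 / \<phi>1 b - 1 / \<phi>1 e)"
        unfolding f_def
      proof (rule vdc)
        fix u assume u: "u \<in> {b..e}"
        then have u0: "0 < u" "u < 1" using b0 e by auto
        show "(\<phi> has_real_derivative \<phi>1 u) (at u)" by (rule D1[OF u0])
        show "(\<phi>1 has_real_derivative \<phi>2 u) (at u)" by (rule D2[OF u0])
        show "\<phi>1 u \<noteq> 0" using mono[of b u] u u0 lb lpos b0 by auto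
        show "\<phi>2 u \<ge> 0" using P2[OF u0] t by simp
      qed (use e in auto)
      also have "\<dots> = 2 / lam" using ge lb lpos by simp
      finally show ?thesis .
    qed
    have n2: "norm (integral {e..1} f) \<le> 1 - e"
    proof -
      have "norm (integral {e..1} f) \<le> integral {e..1} (\<lambda>_. 1::real)"
        using e b0 by (intro integral_norm_bound_integral sub) (auto simp: f_def)
      then show ?thesis using e by simp
    qed
    show "norm (integral {b..1} f) \<le> 2 / lam + (1 - e)"
      using sp n1 n2 norm_triangle_le by (metis add_mono)
  qed
  have left: "norm (integral {0..a} f) \<le> 2 / lam"
  proof (rule eps_left[OF a0])
    fix e assume e: "0 < e" "e < a"
    have sp: "integral {0..e} f + integral {e..a} f = integral {0..a} f"
      using e a1 by (intro Henstock_Kurzweil_Integration.integral_combine sub) auto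
    have n1: "norm (integral {e..a} f) \<le> 2 / lam"
    proof -
      have le: "\<phi>1 e \<le> - lam" using mono[of e a] la e a1 by simp
      have "norm (integral {e..a} f) \<le> 1 / \<bar>\<phi>1 e\<bar> + 1 / \<bar>\<phi>1 a\<bar> + (1 / \<phi>1 e - 1 / \<phi>1 a)"
        unfolding f_def
      proof (rule vdc)
        fix u assume u: "u \<in> {e..a}"
        then have u0: "0 < u" "u < 1" using a1 e by auto
        show "(\<phi> has_real_derivative \<phi>1 u) (at u)" by (rule D1[OF u0])
        show "(\<phi>1 has_real_derivative \<phi>2 u) (at u)" by (rule D2[OF u0])
        show "\<phi>1 u \<noteq> 0" using mono[of u a] u u0 la lpos a1 by auto
        show "\<phi>2 u \<ge> 0" using P2[OF u0] t by simp
      qed (use e in auto)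
      also have "\<dots> = 2 / lam" using le la lpos by simp
      finally show ?thesis .
    qed
    have n2: "norm (integral {0..e} f) \<le> e"
    proof -
      have "norm (integral {0..e} f) \<le> integral {0..e} (\<lambda>_. 1::real)"
        using e a1 by (intro integral_norm_bound_integral sub) (auto simp: f_def)
      then show ?thesis using e by simp
    qed
    show "norm (integral {0..a} f) \<le> 2 / lam + e"
      using sp n1 n2 norm_triangle_le by (metis add_mono add.commute)
  qed
  have sp1: "integral {0..a} f + integral {a..1} f = integral {0..1} f"
    using a0 a1 by (intro Henstock_Kurzweil_Integration.integral_combine intf) auto
  have sp2: "integral {a..b} f + integral {b..1} f = integral {a..1} f"
    using a0 ab b1 by (intro Henstock_Kurzweil_Integration.integral_combine sub) auto
  have "norm (integral {0..1} f) \<le> 2 / lam + (b - a) + 2 / lam"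
  proof -
    have "integral {0..1} f = integral {0..a} f + (integral {a..b} f + integral {b..1} f)"
      using sp1 sp2 by simp
    then have "norm (integral {0..1} f) \<le> norm (integral {0..a} f) + (norm (integral {a..b} f) + norm (integral {b..1} f))"
      by (metis norm_triangle_ineq add_left_mono order_trans)
    then show ?thesis using left mid right by linarith
  qed
  also have "\<dots> \<le> 4 / lam + lam / (4 * t)" using width by simp
  also have "\<dots> = 2 / sqrt t"
  proof -
    have "sqrt t * sqrt t = t" using t by simp
    then show ?thesis unfolding lam_def using t by (simp add: field_simps)
  qed
  finally show ?thesis unfolding f_def \<phi>_def .
qed




lemma unif01_eq: "unif01 = density lborel (\<lambda>x. ennreal (indicator {0<..<1} x))"
  unfolding unif01_def uniform_measure_def by (simp add: ennreal_indicator divide_ennreal_def)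

lemma sets_unif01[measurable_cong]: "sets unif01 = sets borel"
  unfolding unif01_def by simp

lemma prob_unif01: "prob_space unif01"
  unfolding unif01_def by (intro prob_space_uniform_measure) auto

lemma unif01_integral:
  fixes g :: "real \<Rightarrow> complex"
  assumes g[measurable]: "g \<in> borel_measurable borel" and bnd: "\<And>u. norm (g u) \<le> 1"
  shows "(\<integral>u. g u \<partial>unif01) = integral {0..1} g" "g integrable_on {0..1}"
proof -
  have si: "set_integrable lborel {0<..<1} g"
    unfolding set_integrable_def
    by (rule integrableI_bounded_set[where A="{0<..<1}" and B=1]) (auto simp: bnd)
  have "(\<integral>u. g u \<partial>unif01) = (\<integral>u. indicator {0<..<1} u *\<^sub>R g u \<partial>lborel)"
    unfolding unif01_eq by (subst integral_density) auto
  also have "\<dots> = (LINT u:{0<..<1}|lborel. g u)" by (simp add: set_lebesgue_integral_def)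
  also have "\<dots> = integral {0<..<1} g" by (rule set_borel_integral_eq_integral(2)[OF si])
  also have "\<dots> = integral {0..1} g" by (simp add: integral_open_interval_real)
  finally show "(\<integral>u. g u \<partial>unif01) = integral {0..1} g" .
  show "g integrable_on {0..1}"
    using set_borel_integral_eq_integral(1)[OF si] integrable_on_open_interval_real by blast
qed

lemma inner_bound:
  fixes t y z :: real
  assumes t: "t > 0"
  shows "norm (\<integral>u. iexp (t * (u * y + (1 - u) * z + qs_toll u)) \<partial>unif01) \<le> 2 / sqrt t"
proof -
  have eq: "(\<lambda>u. iexp (t * (u * y + (1 - u) * z + qs_toll u))) = (\<lambda>u. iexp (t * (z + (y - z) * u + qs_toll u)))"
    by (rule ext) (simp add: algebra_simps)
  have m: "(\<lambda>u. iexp (t * (z + (y - z) * u + qs_toll u))) \<in> borel_measurable borel" by measurable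
  have b: "norm (iexp (t * (z + (y - z) * u + qs_toll u))) \<le> 1" for u by simp
  show ?thesis unfolding eq unif01_integral[OF m b]
    by (rule core[OF t unif01_integral(2)[OF m b]])
qed

lemma inner_bound_abs:
  fixes t y z :: real
  assumes t: "t \<noteq> 0"
  shows "norm (\<integral>u. iexp (t * (u * y + (1 - u) * z + qs_toll u)) \<partial>unif01) \<le> 2 / sqrt \<bar>t\<bar>"
proof (cases "t > 0")
  case True then show ?thesis using inner_bound[OF True] by simp
next
  case False
  then have t': "- t > 0" using t by simp
  have "(\<integral>u. iexp (t * (u * y + (1 - u) * z + qs_toll u)) \<partial>unif01)
      = cnj (\<integral>u. iexp ((- t) * (u * y + (1 - u) * z + qs_toll u)) \<partial>unif01)"
  proof -
    have "cnj (iexp (- x)) = iexp x" for x by (simp add: exp_cnj)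
    then have "iexp (t * (u * y + (1 - u) * z + qs_toll u)) = cnj (iexp ((- t) * (u * y + (1 - u) * z + qs_toll u)))" for u
      by (simp only: mult_minus_left)
    then show ?thesis by (simp only: Bochner_Integration.integral_cnj)
  qed
  then show ?thesis using inner_bound[OF t', of y z] False by simp
qed

theorem lemma2p4:
  fixes M :: "real measure" and t :: real
  assumes "is_quicksort_limit_law M"
    and "t \<noteq> 0"
  shows "norm (char M t) \<le> 2 * \<bar>t\<bar> powr (-1/2)"
proof -
  define H where "H = (\<lambda>(u, y, z). u * y + (1 - u) * z + qs_toll u)"
  define Q where "Q = M \<Otimes>\<^sub>M M"
  define P where "P = unif01 \<Otimes>\<^sub>M Q"
  have rd: "real_distribution M"
    using assms(1) unfolding is_quicksort_limit_law_def by blast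
  have Meq: "M = distr P borel H"
    using assms(1) unfolding is_quicksort_limit_law_def P_def Q_def H_def by (elim conjE) assumption
  interpret M: real_distribution M by (rule rd)
  have sM[measurable_cong]: "sets M = sets borel" by simp
  interpret U: prob_space unif01 by (rule prob_unif01)
  have pQ: "prob_space Q" unfolding Q_def by (intro prob_space_pair M.prob_space_axioms)
  interpret Q: prob_space Q by (rule pQ)
  interpret UQ: pair_prob_space unif01 Q ..
  interpret P: prob_space P unfolding P_def by (intro prob_space_pair U.prob_space_axioms pQ)
  have sQ[measurable_cong]: "sets Q = sets (borel \<Otimes>\<^sub>M borel)"
    unfolding Q_def by (intro sets_pair_measure_cong) (auto simp: sets_unif01)
  have sP[measurable_cong]: "sets P = sets (borel \<Otimes>\<^sub>M (borel \<Otimes>\<^sub>M borel))"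
    unfolding P_def by (intro sets_pair_measure_cong sQ) (auto simp: sets_unif01)
  have Hm[measurable]: "H \<in> borel_measurable P" unfolding H_def by measurable
  define f where "f = (\<lambda>u (yz::real \<times> real). iexp (t * (u * fst yz + (1 - u) * snd yz + qs_toll u)))"
  have fm[measurable]: "case_prod f \<in> borel_measurable P" unfolding f_def by measurable
  have "char M t = (CLINT x | distr P borel H. iexp (t * x))"
    unfolding char_def using Meq by simp
  also have "\<dots> = (CLINT w | P. iexp (t * H w))"
    by (rule integral_distr) auto
  also have "\<dots> = integral\<^sup>L P (case_prod f)"
    unfolding H_def f_def by (intro Bochner_Integration.integral_cong) auto
  finally have c1: "char M t = integral\<^sup>L (unif01 \<Otimes>\<^sub>M Q) (case_prod f)" unfolding P_def .
  have nf: "norm (f u yz) = 1" for u yz unfolding f_def by (rule norm_exp_i_times)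
  have intf: "integrable (unif01 \<Otimes>\<^sub>M Q) (case_prod f)"
    using P.integrable_const_bound[of "case_prod f" 1] fm nf unfolding P_def by (auto simp: split_beta)
  have c2: "char M t = (\<integral>yz. (\<integral>u. f u yz \<partial>unif01) \<partial>Q)"
    using c1 UQ.integral_snd[OF intf] by simp
  have ib: "norm (\<integral>u. f u yz \<partial>unif01) \<le> 2 / sqrt \<bar>t\<bar>" for yz
    unfolding f_def by (rule inner_bound_abs[OF assms(2)])
  have intI: "integrable Q (\<lambda>yz. \<integral>u. f u yz \<partial>unif01)" by (rule UQ.integrable_snd[OF intf])
  have "norm (char M t) \<le> (\<integral>yz. norm (\<integral>u. f u yz \<partial>unif01) \<partial>Q)"
    unfolding c2 by (rule integral_norm_bound)
  also have "\<dots> \<le> (\<integral>yz. 2 / sqrt \<bar>t\<bar> \<partial>Q)"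
    by (intro integral_mono integrable_norm intI ib) auto
  also have "\<dots> = 2 / sqrt \<bar>t\<bar>" by (simp only: lebesgue_integral_const Q.prob_space scaleR_one)
  also have "\<dots> = 2 * \<bar>t\<bar> powr (-1/2)"
  proof -
    have e: "(-1/2::real) = - (1/2)" by simp
    have "\<bar>t\<bar> powr (-1/2) = 1 / sqrt \<bar>t\<bar>"
      unfolding e powr_minus_divide using assms(2) by (simp add: powr_half_sqrt)
    then show ?thesis by simp
  qed
  finally show ?thesis .
qed

end
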